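(* For all integers $d,n\geq 1$, the tangential variety $\tau_{d,n}\subset\mathbb{P}\mathrm{Sym}^d\mathbb{C}^{n+1}$ to the degree-$d$ Veronese embedding of $\mathbb{P}^n$ is strongly concise with respect to the monomial coordinates. Explicitly: for every multi-index $\alpha\in\mathbb{Z}_{\ge0}^{n+1}$ with $|\alpha|=d$ there exist linear forms $L,M$ in $x_0,\dots,x_n$ such that in $L^{d-1}M$ the coefficient of $\mathbf{x}^\alpha$ is zero and the coefficients of all other monomials of degree $d$ are nonzero.
   Context: $\mathbb{P}\mathrm{Sym}^d\mathbb{C}^{n+1}$ is identified with the projective space of degree-$d$ homogeneous polynomials in $x_0,\dots,x_n$, with projective coordinates given by the coefficients of the monomials $\mathbf{x}^\alpha=x_0^{\alpha_0}\cdots x_n^{\alpha_n}$, $|\alpha|=d$. The tangential variety is $\tau_{d,n}=\overline{\{[L^{d-1}M]: L,M \text{ linear forms}\}}$. A variety $X$ in a projective space with coordinate hyperplanes $H_i$ is strongly concise if for every $i$, $(X\cap H_i)\not\subset\bigcup_{j\ne i}H_j$. *)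

theory Defs
  imports Complex_Main "HOL-Library.Poly_Mapping"
begin

(* Multivariate polynomials over C in variables x_0, x_1, ...: a monomial x^alpha is a
   finitely supported exponent vector, a polynomial a finitely supported map from
   monomials to coefficients; multiplication is the library convolution product. *)

type_synonym mpoly_c = "(nat \<Rightarrow>\<^sub>0 nat) \<Rightarrow>\<^sub>0 complex"

definition linform :: "nat \<Rightarrow> (nat \<Rightarrow> complex) \<Rightarrow> mpoly_c" where
  "linform n c = (\<Sum>i\<le>n. Poly_Mapping.single (Poly_Mapping.single i 1) (c i))"

definition monomials_deg :: "nat \<Rightarrow> nat \<Rightarrow> (nat \<Rightarrow>\<^sub>0 nat) set" where
  "monomials_deg n d = {\<alpha>. Poly_Mapping.keys \<alpha> \<subseteq> {..n} \<and> (\<Sum>i\<le>n. Poly_Mapping.lookup \<alpha> i) = d}"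

end

theory Submission imports Defs begin

lemma lookup_minus_nat: "Poly_Mapping.lookup (f - g) k = Poly_Mapping.lookup f k - Poly_Mapping.lookup (g :: 'a \<Rightarrow>\<^sub>0 nat) k"
  by (simp add: minus_poly_mapping.rep_eq)

lemma add_single_iff:
  fixes b l :: "nat \<Rightarrow>\<^sub>0 nat"
  shows "(b = l + Poly_Mapping.single i 1) \<longleftrightarrow> (1 \<le> Poly_Mapping.lookup b i \<and> l = b - Poly_Mapping.single i 1)"
proof
  assume "b = l + Poly_Mapping.single i 1"
  then show "1 \<le> Poly_Mapping.lookup b i \<and> l = b - Poly_Mapping.single i 1"
    by (auto intro!: poly_mapping_eqI simp: lookup_add lookup_minus_nat lookup_single when_def)
next
  assume "1 \<le> Poly_Mapping.lookup b i \<and> l = b - Poly_Mapping.single i 1"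
  then show "b = l + Poly_Mapping.single i 1"
    by (auto intro!: poly_mapping_eqI simp: lookup_add lookup_minus_nat lookup_single when_def)
qed

lemma lookup_mult_single_e:
  fixes Q :: mpoly_c
  shows "Poly_Mapping.lookup (Q * Poly_Mapping.single (Poly_Mapping.single i 1) c) b =
    (if 1 \<le> Poly_Mapping.lookup b i then c * Poly_Mapping.lookup Q (b - Poly_Mapping.single i 1) else 0)"
proof -
  have "Poly_Mapping.lookup (Q * Poly_Mapping.single (Poly_Mapping.single i 1) c) b =
     (\<Sum>l. Poly_Mapping.lookup Q l * c when b = l + Poly_Mapping.single i 1)"
  proof -
    have inner: "(\<Sum>q. (c when Poly_Mapping.single i 1 = q) when b = l + q) = (c when b = l + Poly_Mapping.single i 1)" for l
    proof -
      have "(\<Sum>q. (c when Poly_Mapping.single i 1 = q) when b = l + q) = (\<Sum>q. (c when b = l + q) when Poly_Mapping.single i 1 = q)"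
        by (rule Sum_any.cong) (simp add: when_def)
      then show ?thesis by simp
    qed
    show ?thesis
      by (simp only: lookup_mult lookup_single inner) (rule Sum_any.cong, simp add: when_def)
  qed
  also have "\<dots> = (\<Sum>l. (Poly_Mapping.lookup Q l * c when 1 \<le> Poly_Mapping.lookup b i) when l = b - Poly_Mapping.single i 1)"
    by (rule Sum_any.cong) (simp only: add_single_iff, simp add: when_def)
  also have "\<dots> = (if 1 \<le> Poly_Mapping.lookup b i then c * Poly_Mapping.lookup Q (b - Poly_Mapping.single i 1) else 0)"
    by (simp add: when_def mult.commute)
  finally show ?thesis .
qed


abbreviation ee :: "nat \<Rightarrow> (nat \<Rightarrow>\<^sub>0 nat)" where
  "ee i \<equiv> Poly_Mapping.single i 1"

lemma lookup_mult_linform: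
  fixes Q :: mpoly_c
  shows "Poly_Mapping.lookup (Q * linform n m) b =
    (\<Sum>i\<le>n. if 1 \<le> Poly_Mapping.lookup b i then m i * Poly_Mapping.lookup Q (b - ee i) else 0)"
  by (simp only: linform_def sum_distrib_left lookup_sum lookup_mult_single_e)

definition mc :: "nat \<Rightarrow> nat \<Rightarrow> (nat \<Rightarrow>\<^sub>0 nat) \<Rightarrow> complex" where
  "mc n k g = (if Poly_Mapping.keys g \<subseteq> {..n} \<and> (\<Sum>j\<le>n. Poly_Mapping.lookup g j) = k
     then fact k / (\<Prod>j\<le>n. fact (Poly_Mapping.lookup g j)) else 0)"

lemma nat_aux: "A = a + R \<Longrightarrow> B = x + R' \<Longrightarrow> R' = R \<Longrightarrow> x = a - 1 \<Longrightarrow> 1 \<le> a \<Longrightarrow> B + 1 = (A::nat)"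
  by simp

lemma sub_e_facts:
  fixes g :: "nat \<Rightarrow>\<^sub>0 nat"
  assumes "i \<le> n" "1 \<le> Poly_Mapping.lookup g i"
  shows "(Poly_Mapping.keys (g - ee i) \<subseteq> {..n}) = (Poly_Mapping.keys g \<subseteq> {..n})"
    and "(\<Sum>j\<le>n. Poly_Mapping.lookup (g - ee i) j) + 1 = (\<Sum>j\<le>n. Poly_Mapping.lookup g j)"
    and "(\<Prod>j\<le>n. fact (Poly_Mapping.lookup g j) :: complex) =
          of_nat (Poly_Mapping.lookup g i) * (\<Prod>j\<le>n. fact (Poly_Mapping.lookup (g - ee i) j))"
proof -
  have gl: "Poly_Mapping.lookup (g - ee i) j = (if j = i then Poly_Mapping.lookup g i - 1 else Poly_Mapping.lookup g j)" for j
    by (simp add: lookup_minus_nat lookup_single when_def)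
  show "(Poly_Mapping.keys (g - ee i) \<subseteq> {..n}) = (Poly_Mapping.keys g \<subseteq> {..n})"
    using assms by (auto simp: subset_iff in_keys_iff lookup_minus_nat lookup_single when_def split: if_splits)
  have fin: "finite {..n}" by simp
  have iin: "i \<in> {..n}" using assms by simp
  have gi: "Poly_Mapping.lookup (g - ee i) i = Poly_Mapping.lookup g i - 1"
    using gl[of i] by (simp only: simp_thms if_True)
  have s1: "(\<Sum>j\<le>n. Poly_Mapping.lookup g j) = Poly_Mapping.lookup g i + (\<Sum>j\<in>{..n}-{i}. Poly_Mapping.lookup g j)"
    by (rule sum.remove[OF fin iin])
  have s2: "(\<Sum>j\<le>n. Poly_Mapping.lookup (g - ee i) j) = Poly_Mapping.lookup (g - ee i) i + (\<Sum>j\<in>{..n}-{i}. Poly_Mapping.lookup (g - ee i) j)"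
    by (rule sum.remove[OF fin iin])
  have s3: "(\<Sum>j\<in>{..n}-{i}. Poly_Mapping.lookup (g - ee i) j) = (\<Sum>j\<in>{..n}-{i}. Poly_Mapping.lookup g j)"
    by (rule sum.cong) (auto simp: lookup_minus_nat lookup_single when_def)
  show "(\<Sum>j\<le>n. Poly_Mapping.lookup (g - ee i) j) + 1 = (\<Sum>j\<le>n. Poly_Mapping.lookup g j)"
    by (rule nat_aux[OF s1 s2 s3 gi assms(2)])
  have p1: "(\<Prod>j\<le>n. fact (Poly_Mapping.lookup g j) :: complex) = fact (Poly_Mapping.lookup g i) * (\<Prod>j\<in>{..n}-{i}. fact (Poly_Mapping.lookup g j))"
    by (rule prod.remove[OF fin iin])
  have p2: "(\<Prod>j\<le>n. fact (Poly_Mapping.lookup (g - ee i) j) :: complex) = fact (Poly_Mapping.lookup (g - ee i) i) * (\<Prod>j\<in>{..n}-{i}. fact (Poly_Mapping.lookup (g - ee i) j))"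
    by (rule prod.remove[OF fin iin])
  have p3: "(\<Prod>j\<in>{..n}-{i}. fact (Poly_Mapping.lookup (g - ee i) j) :: complex) = (\<Prod>j\<in>{..n}-{i}. fact (Poly_Mapping.lookup g j))"
    by (rule prod.cong) (auto simp: lookup_minus_nat lookup_single when_def)
  have p4: "(fact (Poly_Mapping.lookup g i) :: complex) = of_nat (Poly_Mapping.lookup g i) * fact (Poly_Mapping.lookup g i - 1)"
    proof -
    obtain m where m: "Poly_Mapping.lookup g i = Suc m" using assms(2) by (cases "Poly_Mapping.lookup g i") auto
    show ?thesis unfolding m by (simp only: fact_Suc diff_Suc_1)
  qed 
  show "(\<Prod>j\<le>n. fact (Poly_Mapping.lookup g j) :: complex) =
          of_nat (Poly_Mapping.lookup g i) * (\<Prod>j\<le>n. fact (Poly_Mapping.lookup (g - ee i) j))"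
    unfolding p1 p2 p3 p4 gi by (simp only: mult.assoc)
qed

lemma prod_fact_nz: "(\<Prod>j\<le>(n::nat). fact (f j) :: complex) \<noteq> 0"
  by (subst prod_zero_iff) auto

lemma core_sum:
  fixes b :: "nat \<Rightarrow>\<^sub>0 nat" and w :: "nat \<Rightarrow> complex"
  assumes "Poly_Mapping.keys b \<subseteq> {..n}" "(\<Sum>j\<le>n. Poly_Mapping.lookup b j) = Suc k"
  shows "(\<Sum>i\<le>n. if 1 \<le> Poly_Mapping.lookup b i then w i * mc n k (b - ee i) else 0)
    = fact k / (\<Prod>j\<le>n. fact (Poly_Mapping.lookup b j)) * (\<Sum>i\<le>n. of_nat (Poly_Mapping.lookup b i) * w i)"
proof -
  have "(if 1 \<le> Poly_Mapping.lookup b i then w i * mc n k (b - ee i) else 0)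
     = fact k / (\<Prod>j\<le>n. fact (Poly_Mapping.lookup b j)) * (of_nat (Poly_Mapping.lookup b i) * w i)"
    if i: "i \<le> n" for i
  proof (cases "1 \<le> Poly_Mapping.lookup b i")
    case True
    note f = sub_e_facts[OF i True]
    have mc: "mc n k (b - ee i) = fact k / (\<Prod>j\<le>n. fact (Poly_Mapping.lookup (b - ee i) j))"
      using f(1,2) assms by (simp add: mc_def)
    have nz: "(of_nat (Poly_Mapping.lookup b i) :: complex) \<noteq> 0" using True by simp
    show ?thesis using True nz prod_fact_nz[where n=n and f="Poly_Mapping.lookup (b - ee i)"]
      unfolding mc f(3) by (simp add: field_simps)
  next
    case False
    then show ?thesis by simp
  qed
  then have "(\<Sum>i\<le>n. if 1 \<le> Poly_Mapping.lookup b i then w i * mc n k (b - ee i) else 0)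
    = (\<Sum>i\<le>n. fact k / (\<Prod>j\<le>n. fact (Poly_Mapping.lookup b j)) * (of_nat (Poly_Mapping.lookup b i) * w i))"
    by (intro sum.cong) auto
  then show ?thesis by (simp add: sum_distrib_left)
qed

lemma power_lookup:
  "Poly_Mapping.lookup (linform n (\<lambda>_. 1) ^ k) g = mc n k g"
proof (induction k arbitrary: g)
  case 0
  show ?case
  proof (cases "g = 0")
    case True
    then show ?thesis by (simp add: mc_def)
  next
    case False
    then obtain j where j: "Poly_Mapping.lookup g j \<noteq> 0"
      by (metis lookup_zero poly_mapping_eqI)
    have "\<not> (Poly_Mapping.keys g \<subseteq> {..n} \<and> (\<Sum>j\<le>n. Poly_Mapping.lookup g j) = 0)"
    proof
      assume H: "Poly_Mapping.keys g \<subseteq> {..n} \<and> (\<Sum>j\<le>n. Poly_Mapping.lookup g j) = 0"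
      then have "j \<le> n" using j by (metis atMost_iff in_keys_iff subsetD)
      then have "Poly_Mapping.lookup g j = 0" using H by simp
      then show False using j by simp
    qed
    then show ?thesis using False by (simp add: mc_def lookup_one when_def)
  qed
next
  case (Suc k)
  have L: "Poly_Mapping.lookup (linform n (\<lambda>_. 1) ^ Suc k) g =
     (\<Sum>i\<le>n. if 1 \<le> Poly_Mapping.lookup g i then 1 * mc n k (g - ee i) else 0)"
    by (simp only: power_Suc2 lookup_mult_linform Suc.IH)
  show ?case
  proof (cases "Poly_Mapping.keys g \<subseteq> {..n} \<and> (\<Sum>j\<le>n. Poly_Mapping.lookup g j) = Suc k")
    case True
    have "(\<Sum>i\<le>n. of_nat (Poly_Mapping.lookup g i) * (1::complex)) = of_nat (Suc k)"
      using True by (simp flip: of_nat_sum)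
    note eq = this
    have "Poly_Mapping.lookup (linform n (\<lambda>_. 1) ^ Suc k) g =
      fact k / (\<Prod>j\<le>n. fact (Poly_Mapping.lookup g j)) * (\<Sum>i\<le>n. of_nat (Poly_Mapping.lookup g i) * 1)"
      unfolding L using True by (intro core_sum) simp_all
    also have "\<dots> = fact (Suc k) / (\<Prod>j\<le>n. fact (Poly_Mapping.lookup g j))"
      unfolding eq fact_Suc by (simp only: times_divide_eq_left times_divide_eq_right mult.commute)
    also have "\<dots> = mc n (Suc k) g" using True unfolding mc_def by (simp only: simp_thms if_True)
    finally show ?thesis .
  next
    case False
    have Z: "(if 1 \<le> Poly_Mapping.lookup g i then 1 * mc n k (g - ee i) else 0) = 0" if i: "i \<le> n" for i
    proof (cases "1 \<le> Poly_Mapping.lookup g i")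
      case True
      note f = sub_e_facts[OF i True]
      have "\<not> (Poly_Mapping.keys (g - ee i) \<subseteq> {..n} \<and> (\<Sum>j\<le>n. Poly_Mapping.lookup (g - ee i) j) = k)"
        using False f(1,2) by auto
      then have "mc n k (g - ee i) = 0" unfolding mc_def by (rule if_not_P)
      then show ?thesis by simp
    qed simp
    have "Poly_Mapping.lookup (linform n (\<lambda>_. 1) ^ Suc k) g = 0"
      unfolding L by (rule sum.neutral) (metis atMost_iff Z)
    moreover have "mc n (Suc k) g = 0" unfolding mc_def using False by (rule if_not_P)
    ultimately show ?thesis by (simp only:)
  qed
qed


lemma digits_unique:
  fixes a b :: "nat \<Rightarrow> nat"
  assumes "\<forall>i\<le>n. a i < N" "\<forall>i\<le>n. b i < N"
    "(\<Sum>i\<le>n. a i * N ^ i) = (\<Sum>i\<le>n. b i * N ^ i)" "i \<le> n"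
  shows "a i = b i"
  using assms
proof (induction n arbitrary: a b i)
  case 0
  then show ?case by simp
next
  case (Suc n)
  have ea: "(\<Sum>i\<le>Suc n. a i * N ^ i) = a 0 + N * (\<Sum>i\<le>n. a (Suc i) * N ^ i)"
    unfolding sum.atMost_Suc_shift by (simp add: sum_distrib_left ac_simps del: sum.atMost_Suc)
  have eb: "(\<Sum>i\<le>Suc n. b i * N ^ i) = b 0 + N * (\<Sum>i\<le>n. b (Suc i) * N ^ i)"
    unfolding sum.atMost_Suc_shift by (simp add: sum_distrib_left ac_simps del: sum.atMost_Suc)
  have a0: "a 0 < N" "b 0 < N" using Suc.prems by auto
  have E: "a 0 + N * (\<Sum>i\<le>n. a (Suc i) * N ^ i) = b 0 + N * (\<Sum>i\<le>n. b (Suc i) * N ^ i)"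
    using Suc.prems(3) ea eb by simp
  then have "(a 0 + N * (\<Sum>i\<le>n. a (Suc i) * N ^ i)) mod N = (b 0 + N * (\<Sum>i\<le>n. b (Suc i) * N ^ i)) mod N"
    by simp
  then have h0: "a 0 = b 0" using a0 by simp
  then have "(\<Sum>i\<le>n. a (Suc i) * N ^ i) = (\<Sum>i\<le>n. b (Suc i) * N ^ i)"
    using E a0 by simp
  then have IH: "a (Suc j) = b (Suc j)" if "j \<le> n" for j
    using Suc.IH[of "\<lambda>i. a (Suc i)" "\<lambda>i. b (Suc i)" j] Suc.prems that by auto
  show ?case
  proof (cases i)
    case 0
    then show ?thesis using h0 by simp
  next
    case (Suc j)
    then show ?thesis using IH Suc.prems(4) \<open>i = Suc j\<close> by auto
  qed
qed

theorem mainTheorem8: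
  fixes d n :: nat and \<alpha> :: "nat \<Rightarrow>\<^sub>0 nat"
  assumes "d \<ge> 1" and "n \<ge> 1" and "\<alpha> \<in> monomials_deg n d"
  shows "\<exists>l m :: nat \<Rightarrow> complex.
           Poly_Mapping.lookup (linform n l ^ (d - 1) * linform n m) \<alpha> = 0 \<and>
           (\<forall>\<beta>\<in>monomials_deg n d. \<beta> \<noteq> \<alpha> \<longrightarrow>
              Poly_Mapping.lookup (linform n l ^ (d - 1) * linform n m) \<beta> \<noteq> 0)"
proof -
  obtain k where dk: "d = Suc k" using assms(1) by (cases d) auto
  define N where "N = d + 1"
  define B where "B = (\<lambda>\<beta> :: nat \<Rightarrow>\<^sub>0 nat. \<Sum>j\<le>n. Poly_Mapping.lookup \<beta> j * N ^ j)"
  define S where "S = B \<alpha>"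
  define m where "m = (\<lambda>j. of_nat d * of_nat (N ^ j) - of_nat S :: complex)"
  have val: "Poly_Mapping.lookup (linform n (\<lambda>_. 1) ^ (d - 1) * linform n m) \<beta> =
      fact k / (\<Prod>j\<le>n. fact (Poly_Mapping.lookup \<beta> j)) * (of_nat d * (of_nat (B \<beta>) - of_nat S))"
    if b: "\<beta> \<in> monomials_deg n d" for \<beta>
  proof -
    have bk: "Poly_Mapping.keys \<beta> \<subseteq> {..n}" "(\<Sum>j\<le>n. Poly_Mapping.lookup \<beta> j) = Suc k"
      using b dk by (auto simp: monomials_deg_def)
    have "Poly_Mapping.lookup (linform n (\<lambda>_. 1) ^ (d - 1) * linform n m) \<beta> =
      (\<Sum>i\<le>n. if 1 \<le> Poly_Mapping.lookup \<beta> i then m i * mc n k (\<beta> - ee i) else 0)"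
      unfolding lookup_mult_linform power_lookup dk diff_Suc_1 ..
    also have "\<dots> = fact k / (\<Prod>j\<le>n. fact (Poly_Mapping.lookup \<beta> j)) * (\<Sum>i\<le>n. of_nat (Poly_Mapping.lookup \<beta> i) * m i)"
      by (rule core_sum[OF bk])
    also have "(\<Sum>i\<le>n. of_nat (Poly_Mapping.lookup \<beta> i) * m i) =
       of_nat d * of_nat (B \<beta>) - of_nat (\<Sum>i\<le>n. Poly_Mapping.lookup \<beta> i) * of_nat S"
      by (simp add: m_def B_def algebra_simps sum_subtractf sum_distrib_left sum_distrib_right)
    also have "\<dots> = of_nat d * (of_nat (B \<beta>) - of_nat S)"
      using bk dk by (simp add: algebra_simps)
    finally show ?thesis .
  qed
  have nz: "fact k / (\<Prod>j\<le>n. fact (Poly_Mapping.lookup \<beta> j)) \<noteq> (0::complex)" for \<beta>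
    using prod_fact_nz[where n=n and f="Poly_Mapping.lookup \<beta>"] by simp
  have small: "Poly_Mapping.lookup \<beta> i < N" if "\<beta> \<in> monomials_deg n d" "i \<le> n" for \<beta> i
  proof -
    have "Poly_Mapping.lookup \<beta> i \<le> (\<Sum>j\<le>n. Poly_Mapping.lookup \<beta> j)"
      by (rule member_le_sum) (use that in auto)
    then show ?thesis using that by (simp add: monomials_deg_def N_def)
  qed
  show ?thesis
  proof (rule exI[of _ "\<lambda>_. 1 :: complex"], rule exI[of _ m], intro conjI ballI impI)
    show "Poly_Mapping.lookup (linform n (\<lambda>_. 1) ^ (d - 1) * linform n m) \<alpha> = 0"
      unfolding val[OF assms(3)] S_def by simp
  next
    fix \<beta> assume b: "\<beta> \<in> monomials_deg n d" and ne: "\<beta> \<noteq> \<alpha>"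
    have "\<exists>i\<le>n. Poly_Mapping.lookup \<beta> i \<noteq> Poly_Mapping.lookup \<alpha> i"
    proof (rule ccontr)
      assume H: "\<not> ?thesis"
      have "Poly_Mapping.lookup \<beta> i = Poly_Mapping.lookup \<alpha> i" for i
      proof (cases "i \<le> n")
        case False
        then have "i \<notin> Poly_Mapping.keys \<beta>" "i \<notin> Poly_Mapping.keys \<alpha>"
          using b assms(3) by (auto simp: monomials_deg_def)
        then show ?thesis by (simp add: in_keys_iff)
      qed (use H in auto)
      then have "\<beta> = \<alpha>" by (rule poly_mapping_eqI)
      then show False using ne by simp
    qed
    then obtain i where i: "i \<le> n" "Poly_Mapping.lookup \<beta> i \<noteq> Poly_Mapping.lookup \<alpha> i" by blast
    have "B \<beta> \<noteq> B \<alpha>"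
    proof
      assume "B \<beta> = B \<alpha>"
      then have eqB: "(\<Sum>j\<le>n. Poly_Mapping.lookup \<beta> j * N ^ j) = (\<Sum>j\<le>n. Poly_Mapping.lookup \<alpha> j * N ^ j)"
        unfolding B_def .
      have sb: "\<forall>j\<le>n. Poly_Mapping.lookup \<beta> j < N" using small[OF b] by blast
      have sa: "\<forall>j\<le>n. Poly_Mapping.lookup \<alpha> j < N" using small[OF assms(3)] by blast
      have "Poly_Mapping.lookup \<beta> i = Poly_Mapping.lookup \<alpha> i"
        by (rule digits_unique[OF sb sa eqB i(1)])
      then show False using i by simp
    qed
    then have bs: "(of_nat (B \<beta>) - of_nat S :: complex) \<noteq> 0" unfolding S_def by simp
    have dnz: "(of_nat d :: complex) \<noteq> 0" using assms(1) by simp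
    show "Poly_Mapping.lookup (linform n (\<lambda>_. 1) ^ (d - 1) * linform n m) \<beta> \<noteq> 0"
      unfolding val[OF b] using nz[of \<beta>] dnz bs by (simp only: mult_eq_0_iff simp_thms)
  qed
qed

end
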